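(* Let $(X,\mathcal{A})$ be a $(v,k,\lambda)$-BIBD. Then $(X,\mathcal{A})$ has a perfect nesting if and only if $(X,\mathcal{A})$ is a Banff design having an exact colouring.
   Context: A $(v,k,\lambda)$-BIBD is a pair $(X,\mathcal{A})$ where $X$ is a set of $v$ points and $\mathcal{A}$ is a multiset of $k$-subsets of $X$ (blocks) such that every pair of distinct points lies in exactly $\lambda$ blocks. A perfect nesting of $(X,\mathcal{A})$ is a map $\phi:\mathcal{A}\to X$ with $\phi(A)\notin A$ for all $A$ such that $(X,\{A\cup\{\phi(A)\}:A\in\mathcal{A}\})$ is a $(v,k+1,\lambda+1)$-BIBD. The Levi graph $\mathcal{L}(X,\mathcal{A})$ is the bipartite graph with vertex set $X\cup\mathcal{A}$ (each block a separate vertex) and an edge $\{x,A\}$ whenever $x\in A$. A harmonious colouring of a graph is a map $c$ from vertices to colours such that adjacent vertices receive different colours and no two distinct edges receive the same unordered pair of colours; the harmonious chromatic number $h$ is the minimum number of colours in a harmonious colouring. $(X,\mathcal{A})$ is a Banff design if $h(\mathcal{L}(X,\mathcal{A}))=v$; a Banff design has an exact colouring if there is a harmonious colouring of $\mathcal{L}(X,\mathcal{A})$ with $v$ colours in which every pair of distinct colours occurs on exactly one edge. *)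

theory Defs
  imports Main
begin

text \<open>A design: point set X, blocks given as an indexed family B over a finite index
  set I (this represents the multiset of blocks; repeated blocks = distinct indices).\<close>

definition bibd :: "'a set \<Rightarrow> 'b set \<Rightarrow> ('b \<Rightarrow> 'a set) \<Rightarrow> nat \<Rightarrow> nat \<Rightarrow> nat \<Rightarrow> bool" where
  "bibd X I B v k lam \<longleftrightarrow>
     finite X \<and> card X = v \<and> finite I \<and>
     (\<forall>i\<in>I. B i \<subseteq> X \<and> card (B i) = k) \<and>
     (\<forall>x\<in>X. \<forall>y\<in>X. x \<noteq> y \<longrightarrow> card {i\<in>I. x \<in> B i \<and> y \<in> B i} = lam)"

definition perfect_nesting :: "'a set \<Rightarrow> 'b set \<Rightarrow> ('b \<Rightarrow> 'a set) \<Rightarrow> nat \<Rightarrow> nat \<Rightarrow> nat \<Rightarrow> ('b \<Rightarrow> 'a) \<Rightarrow> bool" where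
  "perfect_nesting X I B v k lam \<phi> \<longleftrightarrow>
     (\<forall>i\<in>I. \<phi> i \<in> X \<and> \<phi> i \<notin> B i) \<and>
     bibd X I (\<lambda>i. insert (\<phi> i) (B i)) v (k + 1) (lam + 1)"

definition levi_vertices :: "'a set \<Rightarrow> 'b set \<Rightarrow> ('a + 'b) set" where
  "levi_vertices X I = Inl ` X \<union> Inr ` I"

definition levi_edges :: "'a set \<Rightarrow> 'b set \<Rightarrow> ('b \<Rightarrow> 'a set) \<Rightarrow> ('a + 'b) set set" where
  "levi_edges X I B = {{Inl x, Inr i} | x i. x \<in> X \<and> i \<in> I \<and> x \<in> B i}"

definition harmonious :: "'v set \<Rightarrow> 'v set set \<Rightarrow> ('v \<Rightarrow> nat) \<Rightarrow> bool" where
  "harmonious V E c \<longleftrightarrow>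
     (\<forall>e\<in>E. \<forall>x\<in>e. \<forall>y\<in>e. x \<noteq> y \<longrightarrow> c x \<noteq> c y) \<and>
     (\<forall>e\<in>E. \<forall>e'\<in>E. c ` e = c ` e' \<longrightarrow> e = e')"

definition harmonious_number :: "'v set \<Rightarrow> 'v set set \<Rightarrow> nat" where
  "harmonious_number V E = (LEAST n. \<exists>c. harmonious V E c \<and> card (c ` V) = n)"

definition banff :: "'a set \<Rightarrow> 'b set \<Rightarrow> ('b \<Rightarrow> 'a set) \<Rightarrow> nat \<Rightarrow> bool" where
  "banff X I B v \<longleftrightarrow> harmonious_number (levi_vertices X I) (levi_edges X I B) = v"

definition exact_colouring :: "'a set \<Rightarrow> 'b set \<Rightarrow> ('b \<Rightarrow> 'a set) \<Rightarrow> nat \<Rightarrow> (('a + 'b) \<Rightarrow> nat) \<Rightarrow> bool" where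
  "exact_colouring X I B v c \<longleftrightarrow>
     harmonious (levi_vertices X I) (levi_edges X I B) c \<and>
     card (c ` levi_vertices X I) = v \<and>
     (\<forall>a\<in>c ` levi_vertices X I. \<forall>b\<in>c ` levi_vertices X I. a \<noteq> b \<longrightarrow>
        (\<exists>!e. e \<in> levi_edges X I B \<and> c ` e = {a, b}))"

end

theory Submission
  imports Defs
begin


lemma harm_levi:
  "harmonious V (levi_edges X I B) c \<longleftrightarrow>
    (\<forall>x\<in>X. \<forall>i\<in>I. x \<in> B i \<longrightarrow> c (Inl x) \<noteq> c (Inr i)) \<and>
    (\<forall>x\<in>X. \<forall>i\<in>I. \<forall>x'\<in>X. \<forall>i'\<in>I. x \<in> B i \<longrightarrow> x' \<in> B i' \<longrightarrow>
        {c (Inl x), c (Inr i)} = {c (Inl x'), c (Inr i')} \<longrightarrow> x = x' \<and> i = i')"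
proof
  assume h: "harmonious V (levi_edges X I B) c"
  show "(\<forall>x\<in>X. \<forall>i\<in>I. x \<in> B i \<longrightarrow> c (Inl x) \<noteq> c (Inr i)) \<and>
    (\<forall>x\<in>X. \<forall>i\<in>I. \<forall>x'\<in>X. \<forall>i'\<in>I. x \<in> B i \<longrightarrow> x' \<in> B i' \<longrightarrow>
        {c (Inl x), c (Inr i)} = {c (Inl x'), c (Inr i')} \<longrightarrow> x = x' \<and> i = i')"
  proof (rule conjI; intro ballI impI)
    fix x i assume "x \<in> X" "i \<in> I" "x \<in> B i"
    hence "{Inl x, Inr i} \<in> levi_edges X I B" unfolding levi_edges_def by blast
    moreover have "Inl x \<noteq> (Inr i :: 'a + 'b)" by simp
    ultimately show "c (Inl x) \<noteq> c (Inr i)" using h unfolding harmonious_def by (meson insertI1 insertI2 singletonI)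
  next
    fix x i x' i' assume "x \<in> X" "i \<in> I" "x \<in> B i" "x' \<in> X" "i' \<in> I" "x' \<in> B i'"
      and eq: "{c (Inl x), c (Inr i)} = {c (Inl x'), c (Inr i')}"
    hence "{Inl x, Inr i} \<in> levi_edges X I B" "{Inl x', Inr i'} \<in> levi_edges X I B"
      unfolding levi_edges_def by blast+
    moreover have "c ` {Inl x, Inr i} = c ` {Inl x', Inr i'}" using eq by simp
    ultimately have "{Inl x, Inr i} = ({Inl x', Inr i'} :: ('a + 'b) set)"
      using h unfolding harmonious_def by (meson)
    thus "x = x' \<and> i = i'" by (auto simp: doubleton_eq_iff)
  qed
next
  assume h: "(\<forall>x\<in>X. \<forall>i\<in>I. x \<in> B i \<longrightarrow> c (Inl x) \<noteq> c (Inr i)) \<and>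
    (\<forall>x\<in>X. \<forall>i\<in>I. \<forall>x'\<in>X. \<forall>i'\<in>I. x \<in> B i \<longrightarrow> x' \<in> B i' \<longrightarrow>
        {c (Inl x), c (Inr i)} = {c (Inl x'), c (Inr i')} \<longrightarrow> x = x' \<and> i = i')"
  show "harmonious V (levi_edges X I B) c"
    unfolding harmonious_def
  proof (rule conjI; intro ballI impI)
    fix e p q assume e: "e \<in> levi_edges X I B" and pq: "p \<in> e" "q \<in> e" "p \<noteq> q"
    from e obtain x i where xi: "e = {Inl x, Inr i}" "x \<in> X" "i \<in> I" "x \<in> B i"
      unfolding levi_edges_def by blast
    have "c (Inl x) \<noteq> c (Inr i)" using h xi(2-4) by blast
    with pq xi(1) show "c p \<noteq> c q" by auto
  next
    fix e e' assume "e \<in> levi_edges X I B" "e' \<in> levi_edges X I B" and eq: "c ` e = c ` e'"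
    then obtain x i x' i' where e: "e = {Inl x, Inr i}" "x \<in> X" "i \<in> I" "x \<in> B i"
      and e': "e' = {Inl x', Inr i'}" "x' \<in> X" "i' \<in> I" "x' \<in> B i'"
      unfolding levi_edges_def by blast
    from eq e e' have "{c (Inl x), c (Inr i)} = {c (Inl x'), c (Inr i')}" by simp
    hence "x = x' \<and> i = i'" using h e(2-4) e'(2-4) by blast
    with e e' show "e = e'" by simp
  qed
qed

lemma levi_edges_iff:
  "e \<in> levi_edges X I B \<longleftrightarrow> (\<exists>x i. e = {Inl x, Inr i} \<and> x \<in> X \<and> i \<in> I \<and> x \<in> B i)"
  unfolding levi_edges_def by blast

lemma levi_vertices_img: "c ` levi_vertices X I = (\<lambda>x. c (Inl x)) ` X \<union> (\<lambda>i. c (Inr i)) ` I"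
  unfolding levi_vertices_def by auto

lemma nest_count:
  assumes "bibd X I B v k lam" "\<forall>i\<in>I. \<phi> i \<notin> B i" "a \<in> X" "b \<in> X" "a \<noteq> b"
  shows "card {i\<in>I. a \<in> insert (\<phi> i) (B i) \<and> b \<in> insert (\<phi> i) (B i)}
       = lam + card {i\<in>I. (\<phi> i = a \<and> b \<in> B i) \<or> (\<phi> i = b \<and> a \<in> B i)}"
proof -
  have fI: "finite I" and L: "card {i\<in>I. a \<in> B i \<and> b \<in> B i} = lam"
    using assms unfolding bibd_def by auto
  have "{i\<in>I. a \<in> insert (\<phi> i) (B i) \<and> b \<in> insert (\<phi> i) (B i)}
      = {i\<in>I. a \<in> B i \<and> b \<in> B i} \<union> {i\<in>I. (\<phi> i = a \<and> b \<in> B i) \<or> (\<phi> i = b \<and> a \<in> B i)}"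
    using assms(5) by auto
  moreover have "{i\<in>I. a \<in> B i \<and> b \<in> B i} \<inter> {i\<in>I. (\<phi> i = a \<and> b \<in> B i) \<or> (\<phi> i = b \<and> a \<in> B i)} = {}"
    using assms(2) by auto
  ultimately show ?thesis using fI L by (simp add: card_Un_disjoint)
qed


lemma partA:
  assumes bibd: "bibd X I B v k lam" and pn: "perfect_nesting X I B v k lam \<phi>"
  shows "\<exists>c. exact_colouring X I B v c"
proof -
  from bibd have fX: "finite X" and cX: "card X = v" and fI: "finite I"
    and BX: "\<forall>i\<in>I. B i \<subseteq> X \<and> card (B i) = k"
    unfolding bibd_def by auto
  from pn have phi: "\<forall>i\<in>I. \<phi> i \<in> X \<and> \<phi> i \<notin> B i"
    and nb: "bibd X I (\<lambda>i. insert (\<phi> i) (B i)) v (k+1) (lam+1)"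
    unfolding perfect_nesting_def by auto
  have S1: "card {i\<in>I. (\<phi> i = a \<and> b \<in> B i) \<or> (\<phi> i = b \<and> a \<in> B i)} = 1"
    if "a\<in>X" "b\<in>X" "a\<noteq>b" for a b
  proof -
    have "card {i\<in>I. a \<in> insert (\<phi> i) (B i) \<and> b \<in> insert (\<phi> i) (B i)} = lam + 1"
      using nb that unfolding bibd_def by auto
    moreover have "card {i\<in>I. a \<in> insert (\<phi> i) (B i) \<and> b \<in> insert (\<phi> i) (B i)}
       = lam + card {i\<in>I. (\<phi> i = a \<and> b \<in> B i) \<or> (\<phi> i = b \<and> a \<in> B i)}"
      using nest_count[OF bibd _ that] phi by blast
    ultimately show ?thesis by simp
  qed
  have S1u: "i = i'" if "a\<in>X" "b\<in>X" "a\<noteq>b" "i \<in> I" "i' \<in> I"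
    "(\<phi> i = a \<and> b \<in> B i) \<or> (\<phi> i = b \<and> a \<in> B i)"
    "(\<phi> i' = a \<and> b \<in> B i') \<or> (\<phi> i' = b \<and> a \<in> B i')" for a b i i'
  proof -
    from S1[OF that(1-3)] obtain j where "{i\<in>I. (\<phi> i = a \<and> b \<in> B i) \<or> (\<phi> i = b \<and> a \<in> B i)} = {j}"
      by (auto simp: card_Suc_eq)
    moreover have "i \<in> {i\<in>I. (\<phi> i = a \<and> b \<in> B i) \<or> (\<phi> i = b \<and> a \<in> B i)}"
      "i' \<in> {i\<in>I. (\<phi> i = a \<and> b \<in> B i) \<or> (\<phi> i = b \<and> a \<in> B i)}"
      using that by auto
    ultimately show ?thesis by auto
  qed
  obtain f :: "'a \<Rightarrow> nat" where f: "inj_on f X"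
    using finite_imp_inj_to_nat_seg[OF fX] by blast
  define c where "c = (\<lambda>z. case z of Inl x \<Rightarrow> f x | Inr i \<Rightarrow> f (\<phi> i))"
  have cimg: "c ` levi_vertices X I = f ` X"
    unfolding levi_vertices_img c_def using phi by auto
  have harm: "harmonious (levi_vertices X I) (levi_edges X I B) c"
    unfolding harm_levi
  proof (rule conjI; intro ballI impI)
    fix x i assume "x \<in> X" "i \<in> I" "x \<in> B i"
    thus "c (Inl x) \<noteq> c (Inr i)" unfolding c_def using phi f
      by (auto dest: inj_onD)
  next
    fix x i x' i' assume xi: "x \<in> X" "i \<in> I" "x \<in> B i" "x' \<in> X" "i' \<in> I" "x' \<in> B i'"
      and eq: "{c (Inl x), c (Inr i)} = {c (Inl x'), c (Inr i')}"
    have px: "\<phi> i \<in> X" "\<phi> i' \<in> X" "\<phi> i \<noteq> x" "\<phi> i' \<noteq> x'" using phi xi by auto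
    from eq have "f ` {x, \<phi> i} = f ` {x', \<phi> i'}" unfolding c_def by simp
    moreover have sub: "{x, \<phi> i} \<subseteq> X" "{x', \<phi> i'} \<subseteq> X" using xi px by auto
    ultimately have eq2: "{x, \<phi> i} = {x', \<phi> i'}"
      using inj_on_image_eq_iff[OF f sub] by simp
    have "i = i'"
      apply (rule S1u[of x "\<phi> i"])
      using xi px eq2 by (auto simp: doubleton_eq_iff)
    thus "x = x' \<and> i = i'" using eq2 px by (auto simp: doubleton_eq_iff)
  qed
  have ex: "\<exists>!e. e \<in> levi_edges X I B \<and> c ` e = {a, b}"
    if "a \<in> c ` levi_vertices X I" "b \<in> c ` levi_vertices X I" "a \<noteq> b" for a b
  proof -
    from that cimg obtain p q where pq: "p \<in> X" "q \<in> X" "a = f p" "b = f q" "p \<noteq> q" by auto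
    from S1[OF pq(1,2,5)] obtain j where j: "{i\<in>I. (\<phi> i = p \<and> q \<in> B i) \<or> (\<phi> i = q \<and> p \<in> B i)} = {j}"
      by (auto simp: card_Suc_eq)
    hence jI: "j \<in> I" and jj: "(\<phi> j = p \<and> q \<in> B j) \<or> (\<phi> j = q \<and> p \<in> B j)" by auto
    have "\<exists>e. e \<in> levi_edges X I B \<and> c ` e = {a, b}"
    proof (cases "\<phi> j = p \<and> q \<in> B j")
      case True
      show ?thesis
        by (rule exI[of _ "{Inl q, Inr j}"]) (use True jI pq in \<open>auto simp: levi_edges_iff c_def\<close>)
    next
      case False
      with jj have "\<phi> j = q \<and> p \<in> B j" by blast
      thus ?thesis
        by (intro exI[of _ "{Inl p, Inr j}"]) (use jI pq in \<open>auto simp: levi_edges_iff c_def\<close>)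
    qed
    moreover have "e = e'" if "e \<in> levi_edges X I B" "c ` e = {a, b}" "e' \<in> levi_edges X I B" "c ` e' = {a, b}" for e e'
      using harm that unfolding harmonious_def by metis
    ultimately show ?thesis by blast
  qed
  have "exact_colouring X I B v c"
    unfolding exact_colouring_def
    using harm ex cimg card_image[OF f] cX by auto
  thus ?thesis by blast
qed




lemma choose2_mono: "(n::nat) \<le> m \<Longrightarrow> n choose 2 \<le> m choose 2"
  unfolding choose_two by (simp add: div_le_mono diff_le_mono mult_le_mono)

lemma levi_fin:
  assumes "finite X" "finite I"
  shows "finite (levi_vertices X I)" "finite (levi_edges X I B)"
proof -
  show fV: "finite (levi_vertices X I)" using assms unfolding levi_vertices_def by simp
  have "levi_edges X I B \<subseteq> Pow (levi_vertices X I)"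
    unfolding levi_edges_def levi_vertices_def by blast
  thus "finite (levi_edges X I B)" using fV finite_subset by blast
qed

lemma harm_card_le:
  assumes fin: "finite X" "finite I" and h: "harmonious (levi_vertices X I) (levi_edges X I B) c"
  shows "card (levi_edges X I B) \<le> card (c ` levi_vertices X I) choose 2"
proof -
  let ?V = "levi_vertices X I" and ?E = "levi_edges X I B"
  have h2: "\<forall>e\<in>?E. \<forall>e'\<in>?E. c ` e = c ` e' \<longrightarrow> e = e'"
    using h unfolding harmonious_def by (rule conjunct2)
  have "inj_on ((`) c) ?E" using h2 unfolding inj_on_def by blast
  moreover have "(`) c ` ?E \<subseteq> {S. S \<subseteq> c ` ?V \<and> card S = 2}"
  proof
    fix S assume "S \<in> (`) c ` ?E"
    then obtain e where e: "e \<in> ?E" "S = c ` e" by blast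
    then obtain x i where xi: "e = {Inl x, Inr i}" "x \<in> X" "i \<in> I" "x \<in> B i"
      unfolding levi_edges_def by blast
    have h1: "\<forall>x\<in>X. \<forall>i\<in>I. x \<in> B i \<longrightarrow> c (Inl x) \<noteq> c (Inr i)"
      using h unfolding harm_levi by (rule conjunct1)
    have "c (Inl x) \<noteq> c (Inr i)" using h1 xi by blast
    moreover have "e \<subseteq> ?V" using xi unfolding levi_vertices_def by auto
    ultimately show "S \<in> {S. S \<subseteq> c ` ?V \<and> card S = 2}" using e xi by auto
  qed
  moreover have "finite (c ` ?V)" using levi_fin[OF fin] by auto
  ultimately have "card ?E \<le> card {S. S \<subseteq> c ` ?V \<and> card S = 2}"
    by (intro card_inj_on_le) auto
  thus ?thesis using n_subsets[OF \<open>finite (c ` ?V)\<close>] by simp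
qed

lemma exact_card:
  assumes fin: "finite X" "finite I" and ex: "exact_colouring X I B v c"
  shows "card (levi_edges X I B) = v choose 2"
proof -
  let ?V = "levi_vertices X I" and ?E = "levi_edges X I B"
  have h: "harmonious ?V ?E c" and cv: "card (c ` ?V) = v"
    and eu: "\<forall>a\<in>c ` ?V. \<forall>b\<in>c ` ?V. a \<noteq> b \<longrightarrow> (\<exists>!e. e \<in> ?E \<and> c ` e = {a, b})"
    using ex unfolding exact_colouring_def by auto
  have le: "card ?E \<le> v choose 2" using harm_card_le[OF fin h] cv by simp
  have fE: "finite ?E" using levi_fin[OF fin] by auto
  have "{S. S \<subseteq> c ` ?V \<and> card S = 2} \<subseteq> (`) c ` ?E"
  proof
    fix S assume S: "S \<in> {S. S \<subseteq> c ` ?V \<and> card S = 2}"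
    hence "card S = 2" by simp
    then obtain a b where ab: "S = {a,b}" "a \<noteq> b" unfolding card_2_iff by blast
    have abV: "a \<in> c ` ?V" "b \<in> c ` ?V" using S ab by auto
    have "\<exists>!e. e \<in> ?E \<and> c ` e = {a, b}" using mp[OF bspec[OF bspec[OF eu abV(1)] abV(2)] ab(2)] .
    then obtain e where "e \<in> ?E" "c ` e = {a, b}" by blast
    thus "S \<in> (`) c ` ?E" using ab(1) by blast
  qed
  hence "card {S. S \<subseteq> c ` ?V \<and> card S = 2} \<le> card ((`) c ` ?E)"
    by (rule card_mono[OF finite_imageI[OF fE]])
  also have "\<dots> \<le> card ?E" using fE card_image_le by blast
  finally have "v choose 2 \<le> card ?E"
    using n_subsets[of "c ` ?V" 2] levi_fin[OF fin] cv by simp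
  with le show ?thesis by simp
qed

lemma exact_banff:
  assumes bibd: "bibd X I B v k lam" and ex: "exact_colouring X I B v c"
  shows "banff X I B v"
proof -
  let ?V = "levi_vertices X I" and ?E = "levi_edges X I B"
  have fin: "finite X" "finite I" and cX: "card X = v" using bibd unfolding bibd_def by auto
  have "harmonious ?V ?E c \<and> card (c ` ?V) = v"
    using ex unfolding exact_colouring_def by simp
  hence P: "\<exists>c. harmonious ?V ?E c \<and> card (c ` ?V) = v" by blast
  have lb: "v \<le> n" if "\<exists>c. harmonious ?V ?E c \<and> card (c ` ?V) = n" for n
  proof -
    from that obtain c' where h: "harmonious ?V ?E c'" and n: "card (c' ` ?V) = n" by blast
    have cE: "v choose 2 \<le> n choose 2"
      using harm_card_le[OF fin h] exact_card[OF fin ex] n by simp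
    show ?thesis
    proof (rule ccontr)
      assume "\<not> v \<le> n"
      hence nv: "n < v" by simp
      show False
      proof (cases "v \<le> 1")
        case True
        with nv have "n = 0" "v = 1" by auto
        then obtain x where "x \<in> X" using cX by (metis card.empty ex_in_conv zero_neq_one)
        hence "c' (Inl x) \<in> c' ` ?V" unfolding levi_vertices_def by auto
        moreover have "finite (c' ` ?V)" using levi_fin[OF fin] by auto
        ultimately have "n \<noteq> 0" using n card_0_eq by blast
        with \<open>n = 0\<close> show False by simp
      next
        case False
        then obtain m where m: "v = Suc m" "m \<ge> 1" by (cases v) auto
        have "n choose 2 \<le> m choose 2" using nv m by (intro choose2_mono) auto
        moreover have "v choose 2 = m + (m choose 2)" using m
          by (simp add: numeral_2_eq_2)
        ultimately show False using cE m by simp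
      qed
    qed
  qed
  show ?thesis unfolding banff_def harmonious_number_def
  proof (rule Least_equality)
    show "\<exists>c. harmonious ?V ?E c \<and> card (c ` ?V) = v" by (rule P)
  next
    fix y assume "\<exists>c. harmonious ?V ?E c \<and> card (c ` ?V) = y"
    thus "v \<le> y" by (rule lb)
  qed
qed



lemma harm1: "harmonious V (levi_edges X I B) c \<Longrightarrow>
    (\<forall>x\<in>X. \<forall>i\<in>I. x \<in> B i \<longrightarrow> c (Inl x) \<noteq> c (Inr i))"
  unfolding harm_levi by (rule conjunct1)

lemma harm2: "harmonious V (levi_edges X I B) c \<Longrightarrow>
    (\<forall>x\<in>X. \<forall>i\<in>I. \<forall>x'\<in>X. \<forall>i'\<in>I. x \<in> B i \<longrightarrow> x' \<in> B i' \<longrightarrow>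
        {c (Inl x), c (Inr i)} = {c (Inl x'), c (Inr i')} \<longrightarrow> x = x' \<and> i = i')"
  unfolding harm_levi by (rule conjunct2)

lemma exact_edge:
  assumes ex: "exact_colouring X I B v c" and "a \<in> c ` levi_vertices X I" "b \<in> c ` levi_vertices X I" "a \<noteq> b"
  obtains x i where "x \<in> X" "i \<in> I" "x \<in> B i" "{c (Inl x), c (Inr i)} = {a, b}"
proof -
  have eu: "\<forall>a\<in>c ` levi_vertices X I. \<forall>b\<in>c ` levi_vertices X I. a \<noteq> b \<longrightarrow>
        (\<exists>!e. e \<in> levi_edges X I B \<and> c ` e = {a, b})"
    using ex unfolding exact_colouring_def by (rule conjunct2[OF conjunct2])
  have "\<exists>!e. e \<in> levi_edges X I B \<and> c ` e = {a, b}"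
    using mp[OF bspec[OF bspec[OF eu assms(2)] assms(3)] assms(4)] .
  then obtain e where e: "e \<in> levi_edges X I B" "c ` e = {a, b}" by blast
  then obtain x i where "e = {Inl x, Inr i}" "x \<in> X" "i \<in> I" "x \<in> B i"
    unfolding levi_edges_def by blast
  with e that show ?thesis by auto
qed

lemma card_one_I: "j \<in> S \<Longrightarrow> (\<And>i. i \<in> S \<Longrightarrow> i = j) \<Longrightarrow> card S = 1"
proof -
  assume "j \<in> S" "\<And>i. i \<in> S \<Longrightarrow> i = j"
  hence "S = {j}" by blast
  thus "card S = 1" by simp
qed

lemma partB1:
  assumes bibd: "bibd X I B v k lam" and ex: "exact_colouring X I B v c"
    and inj: "inj_on (\<lambda>x. c (Inl x)) X"
  shows "\<exists>\<phi>. perfect_nesting X I B v k lam \<phi>"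
proof -
  let ?V = "levi_vertices X I" and ?E = "levi_edges X I B" and ?p = "\<lambda>x. c (Inl x)"
  have fin: "finite X" "finite I" and cX: "card X = v"
    and BX: "\<forall>i\<in>I. B i \<subseteq> X \<and> card (B i) = k"
    using bibd unfolding bibd_def by auto
  have h: "harmonious ?V ?E c" and cv: "card (c ` ?V) = v"
    using ex unfolding exact_colouring_def by auto
  note h1 = harm1[OF h] and h2 = harm2[OF h]
  have PV: "?p ` X \<subseteq> c ` ?V" unfolding levi_vertices_def by auto
  have "card (?p ` X) = card (c ` ?V)" using card_image[OF inj] cX cv by simp
  hence PeV: "?p ` X = c ` ?V"
    using card_subset_eq[OF _ PV] levi_fin[OF fin] by auto
  define \<phi> where "\<phi> i = inv_into X ?p (c (Inr i))" for i
  have ciP: "c (Inr i) \<in> ?p ` X" if "i \<in> I" for i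
    using that PeV unfolding levi_vertices_def by auto
  have phiX: "\<phi> i \<in> X" if "i \<in> I" for i
    unfolding \<phi>_def using inv_into_into[OF ciP[OF that]] .
  have phic: "c (Inl (\<phi> i)) = c (Inr i)" if "i \<in> I" for i
    unfolding \<phi>_def using f_inv_into_f[OF ciP[OF that]] .
  have phiB: "\<phi> i \<notin> B i" if "i \<in> I" for i
    using h1 phiX[OF that] phic[OF that] that by blast
  have pairs: "card {i\<in>I. a \<in> insert (\<phi> i) (B i) \<and> b \<in> insert (\<phi> i) (B i)} = lam + 1"
    if ab: "a \<in> X" "b \<in> X" "a \<noteq> b" for a b
  proof -
    let ?S = "{i\<in>I. (\<phi> i = a \<and> b \<in> B i) \<or> (\<phi> i = b \<and> a \<in> B i)}"
    have cab: "?p a \<noteq> ?p b" using inj ab by (auto dest: inj_onD)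
    have aV: "?p a \<in> c ` ?V" "?p b \<in> c ` ?V" using PV ab by auto
    have edge: "\<exists>y\<in>X. y \<in> B i \<and> {c (Inl y), c (Inr i)} = {?p a, ?p b}" if "i \<in> ?S" for i
    proof -
      from that have i: "i \<in> I" by simp
      from that consider "\<phi> i = a" "b \<in> B i" | "\<phi> i = b" "a \<in> B i" by auto
      thus ?thesis
      proof cases
        case 1 thus ?thesis using ab phic[OF i] by (intro bexI[of _ b]) auto
      next
        case 2 thus ?thesis using ab phic[OF i] by (intro bexI[of _ a]) auto
      qed
    qed
    obtain x j where xj: "x \<in> X" "j \<in> I" "x \<in> B j" "{c (Inl x), c (Inr j)} = {?p a, ?p b}"
      using exact_edge[OF ex aV cab] by blast
    have jS: "j \<in> ?S"
    proof -
      from xj(4) have "(?p x = ?p a \<and> c (Inr j) = ?p b) \<or> (?p x = ?p b \<and> c (Inr j) = ?p a)"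
        by (auto simp: doubleton_eq_iff)
      hence "(x = a \<and> \<phi> j = b) \<or> (x = b \<and> \<phi> j = a)"
        using inj ab xj phic[OF xj(2)] phiX[OF xj(2)] by (auto dest: inj_onD)
      thus ?thesis using xj by auto
    qed
    have "card ?S = 1"
    proof (rule card_one_I[OF jS])
      fix i assume iS: "i \<in> ?S"
      then obtain y where y: "y \<in> X" "y \<in> B i" "{c (Inl y), c (Inr i)} = {?p a, ?p b}"
        using edge by blast
      have "i \<in> I" using iS by simp
      thus "i = j" using h2 y xj by metis
    qed
    moreover have "\<forall>i\<in>I. \<phi> i \<notin> B i" using phiB by blast
    ultimately show ?thesis using nest_count[OF bibd _ ab] by simp
  qed
  have "perfect_nesting X I B v k lam \<phi>"
    unfolding perfect_nesting_def bibd_def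
  proof (intro conjI ballI impI)
    fix i assume "i \<in> I" thus "\<phi> i \<in> X" "\<phi> i \<notin> B i" using phiX phiB by auto
  next
    fix i assume i: "i \<in> I"
    thus "insert (\<phi> i) (B i) \<subseteq> X" using phiX BX by auto
    have "finite (B i)" using BX i fin finite_subset by blast
    thus "card (insert (\<phi> i) (B i)) = k + 1" using phiB[OF i] BX i by simp
  next
    fix a b assume "a \<in> X" "b \<in> X" "a \<noteq> b"
    thus "card {i\<in>I. a \<in> insert (\<phi> i) (B i) \<and> b \<in> insert (\<phi> i) (B i)} = lam + 1"
      by (rule pairs)
  qed (use fin cX in auto)
  thus ?thesis by blast
qed



lemma bij_P2:
  assumes "bij_betw f A B"
  shows "bij_betw (image f) {S. S \<subseteq> A \<and> card S = 2} {S. S \<subseteq> B \<and> card S = 2}"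
proof -
  have bp: "bij_betw (image f) (Pow A) (Pow B)" using bij_betw_Pow[OF assms] .
  have inj: "inj_on f A" using assms by (simp add: bij_betw_def)
  have cS: "card (f ` S) = card S" if "S \<subseteq> A" for S
    using card_image[OF inj_on_subset[OF inj that]] .
  show ?thesis unfolding bij_betw_def
  proof
    show "inj_on (image f) {S. S \<subseteq> A \<and> card S = 2}"
      using bp unfolding bij_betw_def by (rule inj_on_subset[OF conjunct1]) auto
    show "image f ` {S. S \<subseteq> A \<and> card S = 2} = {S. S \<subseteq> B \<and> card S = 2}"
    proof
      show "image f ` {S. S \<subseteq> A \<and> card S = 2} \<subseteq> {S. S \<subseteq> B \<and> card S = 2}"
        using cS assms unfolding bij_betw_def by auto
    next
      show "{S. S \<subseteq> B \<and> card S = 2} \<subseteq> image f ` {S. S \<subseteq> A \<and> card S = 2}"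
      proof
        fix T assume T: "T \<in> {S. S \<subseteq> B \<and> card S = 2}"
        hence "T \<in> image f ` Pow A" using bp unfolding bij_betw_def by auto
        then obtain S where "S \<subseteq> A" "T = f ` S" by auto
        thus "T \<in> image f ` {S. S \<subseteq> A \<and> card S = 2}" using cS T by auto
      qed
    qed
  qed
qed


lemma psi_bij:
  assumes az: "\<alpha> \<noteq> \<zeta>" "\<alpha> \<in> C" "\<zeta> \<in> C" and aT: "\<alpha> \<notin> T"
    and sw: "sw = (\<lambda>t. if t = \<alpha> then \<zeta> else if t = \<zeta> then \<alpha> else t)"
    and psi: "\<psi> = (\<lambda>Q. if (\<exists>\<gamma>\<in>T. \<gamma> \<noteq> \<zeta> \<and> (Q = {\<alpha>,\<gamma>} \<or> Q = {\<zeta>,\<gamma>})) then sw ` Q else Q)"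
  shows "bij_betw \<psi> {S. S \<subseteq> C \<and> card S = 2} {S. S \<subseteq> C \<and> card S = 2}"
proof -
  have swsw: "sw (sw t) = t" for t unfolding sw by auto
  have injsw: "inj sw" by (metis swsw injI)
  have swC: "sw ` C \<subseteq> C" using az unfolding sw by auto
  have inv: "\<psi> (\<psi> Q) = Q" for Q
  proof (cases "\<exists>\<gamma>\<in>T. \<gamma> \<noteq> \<zeta> \<and> (Q = {\<alpha>,\<gamma>} \<or> Q = {\<zeta>,\<gamma>})")
    case True
    then obtain \<gamma> where g: "\<gamma> \<in> T" "\<gamma> \<noteq> \<zeta>" "Q = {\<alpha>,\<gamma>} \<or> Q = {\<zeta>,\<gamma>}" by blast
    have ga: "\<gamma> \<noteq> \<alpha>" using g aT by auto
    have sg: "sw \<gamma> = \<gamma>" using ga g unfolding sw by auto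
    have "\<psi> Q = sw ` Q" using True unfolding psi by simp
    moreover have "sw ` Q = {\<alpha>,\<gamma>} \<or> sw ` Q = {\<zeta>,\<gamma>}"
      using g sg unfolding sw by auto
    hence "\<psi> (sw ` Q) = sw ` sw ` Q" using g unfolding psi by auto
    ultimately show ?thesis by (simp add: image_image swsw)
  next
    case False
    hence "\<psi> Q = Q" unfolding psi by (simp only: if_False)
    thus ?thesis by simp
  qed
  have into: "\<psi> Q \<in> {S. S \<subseteq> C \<and> card S = 2}" if "Q \<in> {S. S \<subseteq> C \<and> card S = 2}" for Q
  proof -
    have "sw ` Q \<subseteq> C" using that swC by auto
    moreover have "card (sw ` Q) = card Q" using card_image[OF inj_on_subset[OF injsw]] by simp
    ultimately show ?thesis using that unfolding psi by auto
  qed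
  show ?thesis
    by (rule bij_betw_byWitness[where f'=\<psi>]) (use inv into in auto)
qed


lemma partB2:
  assumes bibd: "bibd X I B v k lam" and ex: "exact_colouring X I B v c"
    and ninj: "\<not> inj_on (\<lambda>x. c (Inl x)) X"
  shows "\<exists>\<phi>. perfect_nesting X I B v k lam \<phi>"
proof -
  let ?V = "levi_vertices X I" and ?E = "levi_edges X I B"
  define C where "C = c ` ?V"
  let ?P2C = "{S. S \<subseteq> C \<and> card S = 2}" and ?P2X = "{S. S \<subseteq> X \<and> card S = 2}"
  have fin: "finite X" "finite I" and cX: "card X = v"
    and BX: "\<forall>i\<in>I. B i \<subseteq> X \<and> card (B i) = k"
    and lamc: "\<forall>x\<in>X. \<forall>y\<in>X. x \<noteq> y \<longrightarrow> card {i\<in>I. x \<in> B i \<and> y \<in> B i} = lam"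
    using bibd unfolding bibd_def by auto
  have h: "harmonious ?V ?E c" and cv: "card C = v"
    using ex unfolding exact_colouring_def C_def by auto
  note h1 = harm1[OF h] and h2 = harm2[OF h]
  have fC: "finite C" unfolding C_def using levi_fin[OF fin] by auto
  have exC: "exact_colouring X I B v c" using ex .
  note exedge = exact_edge[OF ex, folded C_def]
  from ninj obtain x y where xy: "x \<in> X" "y \<in> X" "x \<noteq> y" "c (Inl x) = c (Inl y)"
    unfolding inj_on_def by blast
  have lam0: "lam = 0"
  proof (rule ccontr)
    assume "lam \<noteq> 0"
    hence "card {i\<in>I. x \<in> B i \<and> y \<in> B i} \<noteq> 0" using lamc xy by simp
    then obtain i where i: "i \<in> I" "x \<in> B i" "y \<in> B i" by (metis (no_types, lifting) card.empty empty_Collect_eq)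
    have "{c (Inl x), c (Inr i)} = {c (Inl y), c (Inr i)}" using xy by simp
    hence "x = y \<and> i = i" using h2 xy i by blast
    thus False using xy by simp
  qed
  have no2: "a = b" if "i \<in> I" "a \<in> B i" "b \<in> B i" for i a b
  proof (rule ccontr)
    assume ab: "a \<noteq> b"
    have "a \<in> X" "b \<in> X" using BX that by auto
    hence "card {i\<in>I. a \<in> B i \<and> b \<in> B i} = 0" using lamc ab lam0 by simp
    moreover have "finite {i\<in>I. a \<in> B i \<and> b \<in> B i}" using fin by simp
    ultimately have "{i\<in>I. a \<in> B i \<and> b \<in> B i} = {}" by simp
    thus False using that by blast
  qed
  have v2: "2 \<le> v"
  proof -
    have "card {x, y} \<le> card X" using xy fin by (intro card_mono) auto
    thus ?thesis using xy cX by simp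
  qed
  obtain a0 where a0: "a0 \<in> C" using cv v2 by (metis card.empty ex_in_conv not_numeral_le_zero)
  have cC: "card (C - {a0}) = v - 1" using a0 fC cv by simp
  have "C - {a0} \<noteq> {}"
  proof
    assume "C - {a0} = {}"
    with cC v2 show False by simp
  qed
  then obtain b0 where b0: "b0 \<in> C" "b0 \<noteq> a0" by blast
  obtain x0 i0 where x0: "x0 \<in> X" "i0 \<in> I" "x0 \<in> B i0"
    using exedge[OF a0 b0(1) b0(2)[symmetric]] by blast
  have "B i0 = {x0}" using no2[OF x0(2)] x0(3) by blast
  hence k1: "k = 1" using BX x0(2) by auto
  define pt where "pt i = the_elem (B i)" for i
  have Bpt: "B i = {pt i}" if "i \<in> I" for i
  proof -
    have "card (B i) = 1" using BX k1 that by simp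
    then obtain z where "B i = {z}" by (rule card_1_singletonE)
    thus ?thesis unfolding pt_def by simp
  qed
  have ptX: "pt i \<in> X" if "i \<in> I" for i using Bpt[OF that] BX that by auto
  define ob where "ob i = {c (Inl (pt i)), c (Inr i)}" for i
  have obd: "c (Inl (pt i)) \<noteq> c (Inr i)" if "i \<in> I" for i
    using h1 ptX[OF that] Bpt[OF that] that by blast
  have ob_inj: "i = j" if "i \<in> I" "j \<in> I" "ob i = ob j" for i j
    using h2 ptX Bpt that unfolding ob_def by (metis singletonI)
  have ob_bij: "bij_betw ob I ?P2C"
    unfolding bij_betw_def
  proof
    show "inj_on ob I" using ob_inj by (auto intro: inj_onI)
    show "ob ` I = ?P2C"
    proof
      show "ob ` I \<subseteq> ?P2C"
      proof
        fix S assume "S \<in> ob ` I"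
        then obtain i where i: "i \<in> I" "S = ob i" by blast
        have "Inl (pt i) \<in> ?V" "Inr i \<in> ?V" using i ptX unfolding levi_vertices_def by auto
        hence "S \<subseteq> C" unfolding i ob_def C_def by auto
        moreover have "card S = 2" using obd[OF i(1)] unfolding i ob_def by simp
        ultimately show "S \<in> ?P2C" by simp
      qed
    next
      show "?P2C \<subseteq> ob ` I"
      proof
        fix S assume S: "S \<in> ?P2C"
        hence "card S = 2" by simp
        then obtain a b where ab: "S = {a,b}" "a \<noteq> b" unfolding card_2_iff by blast
        have abC: "a \<in> C" "b \<in> C" using S ab by auto
        obtain x' i' where xi: "x' \<in> X" "i' \<in> I" "x' \<in> B i'" "{c (Inl x'), c (Inr i')} = {a, b}"
          using exedge[OF abC ab(2)] by blast
        have "x' = pt i'" using xi Bpt by auto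
        hence "ob i' = S" using xi ab unfolding ob_def by simp
        thus "S \<in> ob ` I" using xi by blast
      qed
    qed
  qed
  define P where "P = (\<lambda>z. c (Inl z)) ` X"
  have PC: "P \<subseteq> C" unfolding P_def C_def levi_vertices_def by auto
  have "card P \<noteq> card X" using ninj fin inj_on_iff_eq_card unfolding P_def by blast
  hence cardP: "card P < v" using card_image_le[OF fin(1)] cX unfolding P_def by (metis le_neq_implies_less)
  have "P \<noteq> C" using cardP cv by auto
  then obtain \<zeta> where z: "\<zeta> \<in> C" "\<zeta> \<notin> P" using PC by blast
  have zu: "z = \<zeta>" if zz: "z \<in> C" "z \<notin> P" for z
  proof (rule ccontr)
    assume "z \<noteq> \<zeta>"
    then obtain x' i' where xi: "x' \<in> X" "i' \<in> I" "x' \<in> B i'" "{c (Inl x'), c (Inr i')} = {z, \<zeta>}"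
      using exedge[OF zz(1) z(1)] by blast
    have "c (Inl x') \<in> P" using xi unfolding P_def by auto
    moreover have "c (Inl x') \<in> {z, \<zeta>}" using xi(4) by blast
    ultimately show False using zz z by auto
  qed
  have CP: "C = insert \<zeta> P" using zu PC z by blast
  have fP: "finite P" unfolding P_def using fin by simp
  have cardP': "card P = v - 1" using CP cv z fP by simp
  have Py: "(\<lambda>z. c (Inl z)) ` (X - {y}) = P"
  proof
    show "(\<lambda>z. c (Inl z)) ` (X - {y}) \<subseteq> P" unfolding P_def by auto
    show "P \<subseteq> (\<lambda>z. c (Inl z)) ` (X - {y})"
    proof
      fix t assume "t \<in> P"
      then obtain z where zz: "z \<in> X" "t = c (Inl z)" unfolding P_def by blast
      show "t \<in> (\<lambda>z. c (Inl z)) ` (X - {y})"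
      proof (cases "z = y")
        case True thus ?thesis using zz xy by (intro image_eqI[of _ _ x]) auto
      next
        case False thus ?thesis using zz by auto
      qed
    qed
  qed
  have injy: "inj_on (\<lambda>z. c (Inl z)) (X - {y})"
    using fin xy cX cardP' Py by (intro eq_card_imp_inj_on) auto
  define \<kappa> where "\<kappa> z = (if z = y then \<zeta> else c (Inl z))" for z
  have kbij: "bij_betw \<kappa> X C"
    unfolding bij_betw_def
  proof
    show "inj_on \<kappa> X"
    proof (rule inj_onI)
      fix z1 z2 assume zz: "z1 \<in> X" "z2 \<in> X" "\<kappa> z1 = \<kappa> z2"
      have Pz: "c (Inl z) \<in> P" if "z \<in> X" for z using that unfolding P_def by auto
      show "z1 = z2"
      proof (cases "z1 = y"; cases "z2 = y")
        assume "z1 \<noteq> y" "z2 \<noteq> y"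
        thus "z1 = z2" using zz injy unfolding \<kappa>_def by (auto dest: inj_onD)
      qed (use zz Pz z in \<open>auto simp: \<kappa>_def\<close>)
    qed
    have "\<kappa> ` X = \<kappa> ` insert y (X - {y})" using xy by (simp add: insert_absorb)
    also have "\<dots> = insert \<zeta> ((\<lambda>z. c (Inl z)) ` (X - {y}))" unfolding \<kappa>_def by auto
    also have "\<dots> = C" using Py CP by simp
    finally show "\<kappa> ` X = C" .
  qed
  define \<alpha> where "\<alpha> = c (Inl y)"
  define T where "T = (\<lambda>j. c (Inr j)) ` {j\<in>I. pt j = y}"
  have aP: "\<alpha> \<in> P" unfolding \<alpha>_def P_def using xy by auto
  have az: "\<alpha> \<noteq> \<zeta>" using aP z by auto
  have aC: "\<alpha> \<in> C" using aP PC by auto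
  have aT: "\<alpha> \<notin> T"
  proof
    assume "\<alpha> \<in> T"
    then obtain j where "j \<in> I" "pt j = y" "\<alpha> = c (Inr j)" unfolding T_def by blast
    thus False using obd unfolding \<alpha>_def by metis
  qed
  define sw where "sw = (\<lambda>t. if t = \<alpha> then \<zeta> else if t = \<zeta> then \<alpha> else t)"
  define \<psi> where "\<psi> = (\<lambda>Q. if (\<exists>\<gamma>\<in>T. \<gamma> \<noteq> \<zeta> \<and> (Q = {\<alpha>,\<gamma>} \<or> Q = {\<zeta>,\<gamma>})) then sw ` Q else Q)"
  have psibij: "bij_betw \<psi> ?P2C ?P2C"
    by (rule psi_bij[OF az aC z(1) aT sw_def \<psi>_def])
  define c' where "c' i = (if pt i = y then sw (c (Inr i))
      else if c (Inr i) = \<zeta> \<and> c (Inl (pt i)) \<in> T then \<alpha> else c (Inr i))" for i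
  have key: "{\<kappa> (pt i), c' i} = \<psi> (ob i)" if i: "i \<in> I" for i
  proof -
    define \<rho> where "\<rho> = c (Inl (pt i))"
    define g where "g = c (Inr i)"
    have obi: "ob i = {\<rho>, g}" unfolding ob_def \<rho>_def g_def ..
    have \<rho>P: "\<rho> \<in> P" using ptX[OF i] unfolding P_def \<rho>_def by auto
    have \<rho>z: "\<rho> \<noteq> \<zeta>" using \<rho>P z by auto
    have sw_other: "sw t = t" if "t \<noteq> \<alpha>" "t \<noteq> \<zeta>" for t using that unfolding sw_def by simp
    have swa: "sw \<alpha> = \<zeta>" unfolding sw_def by simp
    have swz: "sw \<zeta> = \<alpha>" using az unfolding sw_def by simp
    have psi_yes: "\<psi> Q = sw ` Q" if "\<gamma> \<in> T" "\<gamma> \<noteq> \<zeta>" "Q = {\<alpha>,\<gamma>} \<or> Q = {\<zeta>,\<gamma>}" for Q \<gamma>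
      unfolding \<psi>_def using that by auto
    have psi_no: "\<psi> Q = Q" if "\<not> (\<exists>\<gamma>\<in>T. \<gamma> \<noteq> \<zeta> \<and> (Q = {\<alpha>,\<gamma>} \<or> Q = {\<zeta>,\<gamma>}))" for Q
      unfolding \<psi>_def using that by (simp only: if_False)
    have Tg: "\<gamma> \<noteq> \<alpha>" if "\<gamma> \<in> T" for \<gamma> using aT that by auto
    show ?thesis
    proof (cases "pt i = y")
      case True
      have kp: "\<kappa> (pt i) = \<zeta>" using True \<kappa>_def by simp
      have \<rho>a: "\<rho> = \<alpha>" using True unfolding \<rho>_def \<alpha>_def by simp
      have gT: "g \<in> T" using True i unfolding T_def g_def by auto
      have ga: "g \<noteq> \<alpha>" using Tg gT .
      show ?thesis
      proof (cases "g = \<zeta>")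
        case True
        have c'i: "c' i = \<alpha>" using \<open>pt i = y\<close> True swz unfolding c'_def g_def by simp
        have "\<not> (\<exists>\<gamma>\<in>T. \<gamma> \<noteq> \<zeta> \<and> (ob i = {\<alpha>,\<gamma>} \<or> ob i = {\<zeta>,\<gamma>}))"
        proof
          assume "\<exists>\<gamma>\<in>T. \<gamma> \<noteq> \<zeta> \<and> (ob i = {\<alpha>,\<gamma>} \<or> ob i = {\<zeta>,\<gamma>})"
          then obtain \<gamma> where "\<gamma> \<in> T" "\<gamma> \<noteq> \<zeta>" "ob i = {\<alpha>,\<gamma>} \<or> ob i = {\<zeta>,\<gamma>}" by blast
          thus False using obi \<rho>a True az Tg by (auto simp: doubleton_eq_iff)
        qed
        hence "\<psi> (ob i) = ob i" by (rule psi_no)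
        thus ?thesis using kp c'i obi \<rho>a True by auto
      next
        case False
        have c'i: "c' i = g" using \<open>pt i = y\<close> sw_other[OF ga False] unfolding c'_def g_def by simp
        have "\<psi> (ob i) = sw ` ob i" by (rule psi_yes[OF gT False]) (simp add: obi \<rho>a)
        also have "\<dots> = {\<zeta>, g}" using obi \<rho>a sw_other[OF ga False] swa by simp
        finally show ?thesis using kp c'i by simp
      qed
    next
      case ny: False
      have kp: "\<kappa> (pt i) = \<rho>" using ny unfolding \<kappa>_def \<rho>_def by simp
      show ?thesis
      proof (cases "g = \<zeta> \<and> \<rho> \<in> T")
        case True
        have c'i: "c' i = \<alpha>" using ny True unfolding c'_def g_def \<rho>_def by simp
        have \<rho>a: "\<rho> \<noteq> \<alpha>" using Tg True by blast
        have "\<psi> (ob i) = sw ` ob i" by (rule psi_yes[of \<rho>]) (use True \<rho>z obi in auto)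
        also have "\<dots> = {\<rho>, \<alpha>}" using obi True sw_other[OF \<rho>a \<rho>z] swz by simp
        finally show ?thesis using kp c'i by simp
      next
        case False
        have c'i: "c' i = g" using ny False unfolding c'_def g_def \<rho>_def by auto
        have "\<not> (\<exists>\<gamma>\<in>T. \<gamma> \<noteq> \<zeta> \<and> (ob i = {\<alpha>,\<gamma>} \<or> ob i = {\<zeta>,\<gamma>}))"
        proof
          assume "\<exists>\<gamma>\<in>T. \<gamma> \<noteq> \<zeta> \<and> (ob i = {\<alpha>,\<gamma>} \<or> ob i = {\<zeta>,\<gamma>})"
          then obtain \<gamma> where \<gamma>: "\<gamma> \<in> T" "\<gamma> \<noteq> \<zeta>" "ob i = {\<alpha>,\<gamma>} \<or> ob i = {\<zeta>,\<gamma>}" by blast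
          from \<gamma>(1) obtain j where j: "j \<in> I" "pt j = y" "\<gamma> = c (Inr j)" unfolding T_def by blast
          have obj: "ob j = {\<alpha>, \<gamma>}" unfolding ob_def \<alpha>_def using j by simp
          from \<gamma>(3) show False
          proof
            assume "ob i = {\<alpha>,\<gamma>}"
            hence "i = j" using ob_inj[OF i j(1)] obj by simp
            thus False using ny j by simp
          next
            assume "ob i = {\<zeta>,\<gamma>}"
            hence "\<rho> = \<gamma> \<and> g = \<zeta>" using obi \<rho>z by (auto simp: doubleton_eq_iff)
            thus False using False \<gamma>(1) by simp
          qed
        qed
        hence "\<psi> (ob i) = ob i" by (rule psi_no)
        thus ?thesis using kp c'i obi by simp
      qed
    qed
  qed
  define \<sigma> where "\<sigma> = inv_into X \<kappa>"
  have sbij: "bij_betw \<sigma> C X" unfolding \<sigma>_def by (rule bij_betw_inv_into[OF kbij])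
  have sk: "\<sigma> (\<kappa> z) = z" if "z \<in> X" for z
    unfolding \<sigma>_def using kbij that by (simp add: bij_betw_def inv_into_f_f)
  define \<phi> where "\<phi> i = \<sigma> (c' i)" for i
  define pm where "pm i = {pt i, \<phi> i}" for i
  have pm_eq: "pm i = (image \<sigma> \<circ> \<psi> \<circ> ob) i" if "i \<in> I" for i
  proof -
    have "(image \<sigma> \<circ> \<psi> \<circ> ob) i = \<sigma> ` {\<kappa> (pt i), c' i}" using key[OF that] by simp
    also have "\<dots> = pm i" unfolding pm_def \<phi>_def using sk[OF ptX[OF that]] by simp
    finally show ?thesis by simp
  qed
  have cb: "bij_betw (image \<sigma> \<circ> \<psi> \<circ> ob) I ?P2X"
    using bij_betw_trans[OF bij_betw_trans[OF ob_bij psibij] bij_P2[OF sbij]] by (simp add: comp_assoc)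
  have "bij_betw pm I ?P2X = bij_betw (image \<sigma> \<circ> \<psi> \<circ> ob) I ?P2X"
    by (rule bij_betw_cong) (rule pm_eq)
  with cb have pmbij: "bij_betw pm I ?P2X" by simp
  have pmP: "pm i \<in> ?P2X" if "i \<in> I" for i using pmbij that unfolding bij_betw_def by blast
  have phiX: "\<phi> i \<in> X" if "i \<in> I" for i using pmP[OF that] unfolding pm_def by auto
  have phid: "\<phi> i \<noteq> pt i" if "i \<in> I" for i using pmP[OF that] unfolding pm_def by (auto simp: card_insert_if)
  have ins: "insert (\<phi> i) (B i) = pm i" if "i \<in> I" for i using Bpt[OF that] unfolding pm_def by auto
  have pairs: "card {i\<in>I. a \<in> insert (\<phi> i) (B i) \<and> b \<in> insert (\<phi> i) (B i)} = lam + 1"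
    if ab: "a \<in> X" "b \<in> X" "a \<noteq> b" for a b
  proof -
    have eqs: "{i\<in>I. a \<in> insert (\<phi> i) (B i) \<and> b \<in> insert (\<phi> i) (B i)} = {i\<in>I. pm i = {a, b}}"
    proof (intro Collect_cong conj_cong refl)
      fix i assume i: "i \<in> I"
      have "(a \<in> pm i \<and> b \<in> pm i) = (pm i = {a, b})"
      proof
        assume "a \<in> pm i \<and> b \<in> pm i"
        hence "{a, b} \<subseteq> pm i" by simp
        moreover have "card {a, b} = card (pm i)" using pmP[OF i] ab by simp
        moreover have "finite (pm i)" unfolding pm_def by simp
        ultimately show "pm i = {a, b}" using card_subset_eq by metis
      qed auto
      thus "(a \<in> insert (\<phi> i) (B i) \<and> b \<in> insert (\<phi> i) (B i)) = (pm i = {a, b})"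
        using ins[OF i] by simp
    qed
    have abP: "{a, b} \<in> ?P2X" using ab by simp
    hence "{a, b} \<in> pm ` I" using pmbij unfolding bij_betw_def by simp
    then obtain j where j: "j \<in> I" "{a, b} = pm j" by (rule imageE)
    have "card {i\<in>I. pm i = {a, b}} = 1"
    proof (rule card_one_I)
      show "j \<in> {i\<in>I. pm i = {a, b}}" using j by simp
    next
      fix i assume "i \<in> {i\<in>I. pm i = {a, b}}"
      hence "i \<in> I" "pm i = pm j" using j by auto
      thus "i = j" using j(1) pmbij unfolding bij_betw_def by (auto dest: inj_onD)
    qed
    thus ?thesis using eqs lam0 by simp
  qed
  have "perfect_nesting X I B v k lam \<phi>"
    unfolding perfect_nesting_def bibd_def
  proof (intro conjI ballI impI)
    fix i assume i: "i \<in> I" thus "\<phi> i \<in> X" "\<phi> i \<notin> B i" using phiX phid Bpt by auto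
    show "insert (\<phi> i) (B i) \<subseteq> X" using phiX ptX Bpt i by auto
    show "card (insert (\<phi> i) (B i)) = k + 1" using phid[OF i] Bpt[OF i] k1 by simp
  next
    fix a b assume "a \<in> X" "b \<in> X" "a \<noteq> b"
    thus "card {i\<in>I. a \<in> insert (\<phi> i) (B i) \<and> b \<in> insert (\<phi> i) (B i)} = lam + 1"
      by (rule pairs)
  qed (use fin cX in auto)
  thus ?thesis by blast
qed


theorem theorem5p2:
  fixes X :: "'a set" and I :: "'b set" and B :: "'b \<Rightarrow> 'a set" and v k lam :: nat
  assumes "bibd X I B v k lam"
  shows "(\<exists>\<phi>. perfect_nesting X I B v k lam \<phi>) \<longleftrightarrow>
         (banff X I B v \<and> (\<exists>c. exact_colouring X I B v c))"
proof
  assume "\<exists>\<phi>. perfect_nesting X I B v k lam \<phi>"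
  then obtain \<phi> where "perfect_nesting X I B v k lam \<phi>" by blast
  then obtain c where c: "exact_colouring X I B v c" using partA[OF assms] by blast
  show "banff X I B v \<and> (\<exists>c. exact_colouring X I B v c)"
    using exact_banff[OF assms c] c by blast
next
  assume "banff X I B v \<and> (\<exists>c. exact_colouring X I B v c)"
  then obtain c where c: "exact_colouring X I B v c" by blast
  show "\<exists>\<phi>. perfect_nesting X I B v k lam \<phi>"
  proof (cases "inj_on (\<lambda>x. c (Inl x)) X")
    case True
    thus ?thesis by (rule partB1[OF assms c])
  next
    case False
    thus ?thesis by (rule partB2[OF assms c])
  qed
qed

end
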